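(* Fix $\lambda_s>0,\lambda>0$, $\alpha\in(0,1)$ and a constant $c>0$. For each $n\ge3$ let $\tilde n(n)$ be an integer with $1\le\tilde n(n)\le n$ and $\tilde n(n)\le c\,n^\alpha$. Then there exist $C>0$ and $N$ such that for all $n\ge N$ and every choice of $\tilde n(n)$ distinct jammed links of the ring $R(n)$, the average age of the jammed ring satisfies $$\Delta^\ell\le\begin{cases}C\,n^{\alpha}, & \alpha\ge \tfrac12,\\ C\sqrt n, & \alpha<\tfrac12.\end{cases}$$
   Context: Version-age model. A gossip network on a finite node set $\mathcal N$ is specified by source rates $\lambda_{0j}>0$ ($j\in\mathcal N$) and gossip rates $\lambda_{ij}\ge 0$ for ordered pairs $i\neq j$ ($\lambda_{ij}$ is the rate at which node $i$ sends updates to node $j$); $\lambda_s>0$ is the source's update rate. For nonempty $S\subseteq\mathcal N$ let $N(S)=\{i\in\mathcal N\setminus S:\ \sum_{j\in S}\lambda_{ij}>0\}$, and define the version ages recursively by $$\Delta_S=\frac{\lambda_s+\sum_{i\in N(S)}\big(\sum_{j\in S}\lambda_{ij}\big)\Delta_{S\cup\{i\}}}{\sum_{j\in S}\lambda_{0j}+\sum_{i\in N(S)}\sum_{j\in S}\lambda_{ij}}$$ (well defined by downward induction on $|S|$); $\Delta_i=\Delta_{\{i\}}$. Ring $R(n)$: nodes $\{1,\dots,n\}$, $\lambda_{0j}=\lambda/n$, and for each of the $n$ ring links $\{i,i+1\}$ (indices mod $n$) $\lambda_{i,i+1}=\lambda_{i+1,i}=\lambda/2$; all other rates $0$. Jamming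 $\tilde n$ distinct ring links means setting both rates of each of these links to $0$. The average age of the jammed ring is $\Delta^\ell=\frac1n\sum_{i=1}^n\Delta_i$ computed in the jammed network. *)

theory Defs
  imports Complex_Main
begin

text \<open>General gossip network on node set V: source rates l0 j, gossip rates l i j
  (rate at which node i sends to node j), source update rate ls.\<close>

definition nbrs :: "nat set \<Rightarrow> (nat \<Rightarrow> nat \<Rightarrow> real) \<Rightarrow> nat set \<Rightarrow> nat set" where
  "nbrs V l S = {i \<in> V - S. (\<Sum>j\<in>S. l i j) > 0}"

text \<open>Version-age recursion with explicit fuel k = |V - S| (downward induction on |S|).
  When the fuel is 0 we have S \<supseteq> V, so the neighbour set is empty and the
  recursion reduces to ls / sum of source rates.\<close>

primrec age_fuel :: "nat set \<Rightarrow> (nat \<Rightarrow> real) \<Rightarrow> (nat \<Rightarrow> nat \<Rightarrow> real) \<Rightarrow> real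
    \<Rightarrow> nat \<Rightarrow> nat set \<Rightarrow> real" where
  "age_fuel V l0 l ls 0 S = ls / (\<Sum>j\<in>S. l0 j)"
| "age_fuel V l0 l ls (Suc k) S =
     (ls + (\<Sum>i\<in>nbrs V l S. (\<Sum>j\<in>S. l i j) * age_fuel V l0 l ls k (insert i S)))
     / ((\<Sum>j\<in>S. l0 j) + (\<Sum>i\<in>nbrs V l S. \<Sum>j\<in>S. l i j))"

definition version_age :: "nat set \<Rightarrow> (nat \<Rightarrow> real) \<Rightarrow> (nat \<Rightarrow> nat \<Rightarrow> real) \<Rightarrow> real
    \<Rightarrow> nat set \<Rightarrow> real" where
  "version_age V l0 l ls S = age_fuel V l0 l ls (card (V - S)) S"

text \<open>Ring R(n) on nodes {0..<n}; link k (k < n) joins k and (k+1) mod n.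
  J is the set of indices of jammed links.\<close>

definition ring_link :: "nat \<Rightarrow> nat set \<Rightarrow> nat \<Rightarrow> nat \<Rightarrow> bool" where
  "ring_link n J i j = (\<exists>k<n. k \<notin> J \<and>
      ((i = k \<and> j = (k + 1) mod n) \<or> (j = k \<and> i = (k + 1) mod n)))"

definition ring_rate :: "real \<Rightarrow> nat \<Rightarrow> nat set \<Rightarrow> nat \<Rightarrow> nat \<Rightarrow> real" where
  "ring_rate lam n J i j = (if i \<noteq> j \<and> ring_link n J i j then lam / 2 else 0)"

definition ring_src :: "real \<Rightarrow> nat \<Rightarrow> nat \<Rightarrow> real" where
  "ring_src lam n j = lam / real n"

definition jammed_ring_avg_age :: "real \<Rightarrow> real \<Rightarrow> nat \<Rightarrow> nat set \<Rightarrow> real" where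
  "jammed_ring_avg_age ls lam n J =
     (1 / real n) * (\<Sum>i<n. version_age {..<n} (ring_src lam n) (ring_rate lam n J) ls {i})"

end

theory Submission
  imports Defs
begin



lemma nbrs_sub: "nbrs V l S \<subseteq> V - S"
  unfolding nbrs_def by auto

lemma age_le_basic:
  assumes l0: "\<forall>j. l0 j \<ge> 0" and l: "\<forall>i j. l i j \<ge> (0::real)" and ls: "ls \<ge> 0"
  shows "(\<Sum>j\<in>S. l0 j) > 0 \<Longrightarrow> age_fuel V l0 l ls k S \<le> ls / (\<Sum>j\<in>S. l0 j)"
proof (induction k arbitrary: S)
  case 0
  then show ?case by simp
next
  case (Suc k)
  define a where "a = (\<Sum>j\<in>S. l0 j)"
  define N where "N = nbrs V l S"
  define w where "w i = (\<Sum>j\<in>S. l i j)" for i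
  define W where "W = (\<Sum>i\<in>N. w i)"
  have apos: "a > 0" using Suc.prems a_def by simp
  have finS: "finite S"
  proof (rule ccontr)
    assume "infinite S" hence "a = 0" by (simp add: a_def)
    with apos show False by simp
  qed
  have wnn: "w i \<ge> 0" for i unfolding w_def using l by (simp add: sum_nonneg)
  have Wnn: "W \<ge> 0" unfolding W_def using wnn by (simp add: sum_nonneg)
  have A: "age_fuel V l0 l ls k (insert i S) \<le> ls / a" if "i \<in> N" for i
  proof -
    have "i \<notin> S" using that nbrs_sub N_def by blast
    hence e: "(\<Sum>j\<in>insert i S. l0 j) = l0 i + a" using finS a_def by simp
    hence p: "(\<Sum>j\<in>insert i S. l0 j) > 0" using apos l0 by (metis add_nonneg_pos)
    have "age_fuel V l0 l ls k (insert i S) \<le> ls / (l0 i + a)" using Suc.IH[OF p] e by simp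
    also have "\<dots> \<le> ls / a"
    proof -
      have "l0 i \<ge> 0" using l0 by simp
      thus ?thesis using apos ls by (intro divide_left_mono) auto
    qed
    finally show ?thesis .
  qed
  have "(\<Sum>i\<in>N. w i * age_fuel V l0 l ls k (insert i S)) \<le> (\<Sum>i\<in>N. w i * (ls / a))"
    by (rule sum_mono, rule mult_left_mono) (simp_all add: A wnn)
  also have "\<dots> = W * (ls / a)" unfolding W_def by (rule sum_distrib_right[symmetric])
  finally have B: "(\<Sum>i\<in>N. w i * age_fuel V l0 l ls k (insert i S)) \<le> W * (ls / a)" .
  have "age_fuel V l0 l ls (Suc k) S = (ls + (\<Sum>i\<in>N. w i * age_fuel V l0 l ls k (insert i S))) / (a + W)"
    by (simp add: a_def N_def w_def W_def)
  also have "\<dots> \<le> (ls + W * (ls / a)) / (a + W)"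
    using B apos Wnn by (intro divide_right_mono) auto
  also have "\<dots> = ls / a"
  proof -
    have "ls + W * (ls / a) = (ls / a) * (a + W)" using apos by (simp add: field_simps)
    moreover have "a + W > 0" using apos Wnn by simp
    ultimately show ?thesis by simp
  qed
  finally show ?case by (simp add: a_def)
qed

lemma age_step:
  assumes l: "\<forall>i j. l i j \<ge> (0::real)" and ls: "ls \<ge> 0" and fin: "finite V"
    and a: "(\<Sum>j\<in>S. l0 j) \<ge> 0" and g: "g > 0" and ne: "nbrs V l S \<noteq> {}"
    and w: "\<forall>i\<in>nbrs V l S. (\<Sum>j\<in>S. l i j) \<ge> g"
    and ih: "\<forall>i\<in>nbrs V l S. age_fuel V l0 l ls k (insert i S) \<le> \<beta>" and b: "\<beta> \<ge> 0"
  shows "age_fuel V l0 l ls (Suc k) S \<le> ls / g + \<beta>"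
proof -
  define a where "a = (\<Sum>j\<in>S. l0 j)"
  define N where "N = nbrs V l S"
  define w where "w i = (\<Sum>j\<in>S. l i j)" for i
  define W where "W = (\<Sum>i\<in>N. w i)"
  have finN: "finite N" using fin nbrs_sub N_def by (metis finite_Diff finite_subset)
  have wnn: "w i \<ge> 0" for i unfolding w_def using l by (simp add: sum_nonneg)
  obtain i0 where i0: "i0 \<in> N" using ne N_def by blast
  have "w i0 \<le> W" unfolding W_def using finN i0 wnn by (simp add: member_le_sum)
  hence Wg: "W \<ge> g" using w i0 N_def w_def by force
  have "(\<Sum>i\<in>N. w i * age_fuel V l0 l ls k (insert i S)) \<le> (\<Sum>i\<in>N. w i * \<beta>)"
    by (rule sum_mono) (use ih N_def wnn in \<open>simp add: mult_left_mono\<close>)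
  also have "\<dots> = W * \<beta>" unfolding W_def by (simp add: sum_distrib_right)
  finally have B: "(\<Sum>i\<in>N. w i * age_fuel V l0 l ls k (insert i S)) \<le> W * \<beta>" .
  have "age_fuel V l0 l ls (Suc k) S = (ls + (\<Sum>i\<in>N. w i * age_fuel V l0 l ls k (insert i S))) / (a + W)"
    by (simp add: a_def N_def w_def W_def)
  also have "\<dots> \<le> (ls + W * \<beta>) / (a + W)"
    using B a a_def Wg g by (intro divide_right_mono) auto
  also have "\<dots> \<le> (ls + W * \<beta>) / W"
    using a a_def Wg g ls b by (intro divide_left_mono) auto
  also have "\<dots> = ls / W + \<beta>" using Wg g by (simp add: field_simps)
  also have "\<dots> \<le> ls / g + \<beta>" using Wg g ls by (simp add: divide_left_mono)
  finally show ?thesis .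
qed




lemma age_basic2:
  assumes fin: "finite V" and l0: "\<forall>j. l0 j = x" and x: "x > 0"
    and l: "\<forall>i j. l i j \<ge> (0::real)" and ls: "ls \<ge> 0" and g: "g > 0"
    and M: "M \<ge> 1" and K: "K \<ge> 1"
    and S: "S \<subseteq> V" "S \<noteq> {}" and c: "min K M \<le> card S"
  shows "age_fuel V l0 l ls k S \<le> real (K - card S) * (ls / g) + ls / (x * real (min K M))"
proof -
  have finS: "finite S" using S fin finite_subset by blast
  have cS: "card S > 0" using finS S by (simp add: card_gt_0_iff)
  have a: "(\<Sum>j\<in>S. l0 j) = real (card S) * x" using l0 by simp
  have "age_fuel V l0 l ls k S \<le> ls / (real (card S) * x)"
    using age_le_basic[of l0 l ls S V k] l0 x l ls a cS by simp
  also have "\<dots> \<le> ls / (x * real (min K M))"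
    using c ls x K M by (intro divide_left_mono) (auto simp: mult.commute)
  also have "\<dots> \<le> real (K - card S) * (ls / g) + ls / (x * real (min K M))"
    using ls g by simp
  finally show ?thesis .
qed

lemma age_main:
  assumes fin: "finite V" and l0: "\<forall>j. l0 j = x" and x: "x > 0"
    and l: "\<forall>i j. l i j \<ge> (0::real)" and ls: "ls \<ge> 0" and g: "g > 0"
    and w: "\<forall>S i. S \<subseteq> V \<longrightarrow> i \<in> nbrs V l S \<longrightarrow> (\<Sum>j\<in>S. l i j) \<ge> g"
    and M: "M \<ge> 1" and K: "K \<ge> 1"
  shows "\<forall>S. S \<subseteq> V \<longrightarrow> S \<noteq> {} \<longrightarrow> card (V - S) = k \<longrightarrow>
     (\<forall>T. S \<subseteq> T \<longrightarrow> T \<subseteq> V \<longrightarrow> nbrs V l T = {} \<longrightarrow> M \<le> card T) \<longrightarrow>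
     age_fuel V l0 l ls k S \<le> real (K - card S) * (ls / g) + ls / (x * real (min K M))"
proof (induction k)
  case 0
  show ?case
  proof (intro allI impI)
    fix S assume S: "S \<subseteq> V" "S \<noteq> {}" "card (V - S) = 0"
      and T: "\<forall>T. S \<subseteq> T \<longrightarrow> T \<subseteq> V \<longrightarrow> nbrs V l T = {} \<longrightarrow> M \<le> card T"
    have "V - S = {}" using S fin by simp
    hence "S = V" using S by blast
    moreover have "nbrs V l V = {}" using nbrs_sub by blast
    ultimately have "M \<le> card S" using T by blast
    thus "age_fuel V l0 l ls 0 S \<le> real (K - card S) * (ls / g) + ls / (x * real (min K M))"
      by (intro age_basic2[OF fin l0 x l ls g M K S(1,2)]) simp
  qed
next
  case (Suc k)
  show ?case
  proof (intro allI impI)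
    fix S assume S: "S \<subseteq> V" "S \<noteq> {}" "card (V - S) = Suc k"
      and T: "\<forall>T. S \<subseteq> T \<longrightarrow> T \<subseteq> V \<longrightarrow> nbrs V l T = {} \<longrightarrow> M \<le> card T"
    have finS: "finite S" using S fin finite_subset by blast
    show "age_fuel V l0 l ls (Suc k) S \<le> real (K - card S) * (ls / g) + ls / (x * real (min K M))"
    proof (cases "min K M \<le> card S")
      case True
      then show ?thesis by (intro age_basic2[OF fin l0 x l ls g M K S(1,2)])
    next
      case False
      hence cK: "card S < K" by simp
      have ne: "nbrs V l S \<noteq> {}" using T S False by force
      define \<beta> where "\<beta> = real (K - card S - 1) * (ls / g) + ls / (x * real (min K M))"
      have b0: "\<beta> \<ge> 0" unfolding \<beta>_def using ls g x by simp
      have ih: "\<forall>i\<in>nbrs V l S. age_fuel V l0 l ls k (insert i S) \<le> \<beta>"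
      proof
        fix i assume i: "i \<in> nbrs V l S"
        hence iV: "i \<in> V" "i \<notin> S" using nbrs_sub by blast+
        have e1: "V - insert i S = (V - S) - {i}" by blast
        have c1: "card (V - insert i S) = k" unfolding e1 using S(3) iV fin
          by (simp add: card_Diff_singleton)
        have c2: "card (insert i S) = card S + 1" using finS iV by simp
        have "age_fuel V l0 l ls k (insert i S) \<le> real (K - card (insert i S)) * (ls / g) + ls / (x * real (min K M))"
          using Suc.IH S iV T c1 by auto
        thus "age_fuel V l0 l ls k (insert i S) \<le> \<beta>" using c2 \<beta>_def by simp
      qed
      have "age_fuel V l0 l ls (Suc k) S \<le> ls / g + \<beta>"
        using age_step[OF l ls fin _ g ne _ ih b0] w S x l0 by (simp add: sum_nonneg)
      also have "\<dots> = real (K - card S) * (ls / g) + ls / (x * real (min K M))"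
      proof -
        have "real (K - card S) = real (K - card S - 1) + 1" using cK by (simp add: of_nat_diff)
        hence "real (K - card S) * (ls / g) = real (K - card S - 1) * (ls / g) + ls / g"
          by (simp only: distrib_right mult_1_left)
        thus ?thesis unfolding \<beta>_def by linarith
      qed
      finally show ?thesis .
    qed
  qed
qed



lemma mod_cancel_nat:
  fixes a b c n :: nat assumes "(a + c) mod n = (b + c) mod n" shows "a mod n = b mod n"
proof -
  have "int ((a + c) mod n) = int ((b+c) mod n)" using assms by simp
  hence "(int a + int c) mod int n = (int b + int c) mod int n" by (simp add: of_nat_mod)
  hence "(int a + int c - int c) mod int n = (int b + int c - int c) mod int n" by (metis mod_diff_left_eq)
  hence "int a mod int n = int b mod int n" by simp
  hence "int (a mod n) = int (b mod n)" by (simp add: of_nat_mod)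
  thus ?thesis by simp
qed

lemma rr_nonneg: "lam > 0 \<Longrightarrow> ring_rate lam n J i j \<ge> 0"
  unfolding ring_rate_def by simp

lemma rr_pos: "ring_rate lam n J i j > 0 \<Longrightarrow> ring_rate lam n J i j = lam / 2"
  unfolding ring_rate_def by (auto split: if_splits)

lemma rr_weight:
  assumes lam: "lam > 0" and S: "S \<subseteq> {..<n}" and i: "i \<in> nbrs {..<n} (ring_rate lam n J) S"
  shows "(\<Sum>j\<in>S. ring_rate lam n J i j) \<ge> lam / 2"
proof -
  have finS: "finite S" using S finite_subset by blast
  have pos: "(\<Sum>j\<in>S. ring_rate lam n J i j) > 0" using i unfolding nbrs_def by simp
  obtain j where j: "j \<in> S" "ring_rate lam n J i j > 0"
  proof (rule ccontr)
    assume "\<not> thesis"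
    hence "\<forall>j\<in>S. ring_rate lam n J i j \<le> 0" using that by force
    hence "(\<Sum>j\<in>S. ring_rate lam n J i j) \<le> 0" by (simp add: sum_nonpos)
    with pos show False by simp
  qed
  have "ring_rate lam n J i j \<le> (\<Sum>j\<in>S. ring_rate lam n J i j)"
    using finS j(1) rr_nonneg[OF lam] by (intro member_le_sum) auto
  thus ?thesis using rr_pos[OF j(2)] by simp
qed

lemma closed_edge:
  assumes lam: "lam > 0" and n: "n \<ge> 3" and T: "T \<subseteq> {..<n}"
    and cl: "nbrs {..<n} (ring_rate lam n J) T = {}" and k: "k < n" "k \<notin> J"
  shows "k \<in> T \<longleftrightarrow> Suc k mod n \<in> T"
proof -
  have finT: "finite T" using T finite_subset by blast
  have ne: "Suc k mod n \<noteq> k"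
  proof
    assume h: "Suc k mod n = k"
    show False
    proof (cases "Suc k < n")
      case True thus False using h by simp
    next
      case False hence "Suc k = n" using k by simp
      thus False using h n by simp
    qed
  qed
  have lk: "ring_link n J (Suc k mod n) k" "ring_link n J k (Suc k mod n)"
    unfolding ring_link_def using k by auto
  have r1: "ring_rate lam n J (Suc k mod n) k = lam / 2" "ring_rate lam n J k (Suc k mod n) = lam / 2"
    unfolding ring_rate_def using lk ne by auto
  have bnd: "i \<in> nbrs {..<n} (ring_rate lam n J) T" if "i < n" "i \<notin> T" "j \<in> T"
    "ring_rate lam n J i j = lam / 2" for i j
  proof -
    have "ring_rate lam n J i j \<le> (\<Sum>j\<in>T. ring_rate lam n J i j)"
      using finT that rr_nonneg[OF lam] by (intro member_le_sum) auto
    thus ?thesis unfolding nbrs_def using that lam by auto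
  qed
  show ?thesis
  proof
    assume "k \<in> T"
    show "Suc k mod n \<in> T"
    proof (rule ccontr)
      assume "Suc k mod n \<notin> T"
      moreover have "Suc k mod n < n" using n by simp
      ultimately show False using bnd[OF _ _ \<open>k \<in> T\<close> r1(1)] cl by blast
    qed
  next
    assume h: "Suc k mod n \<in> T"
    show "k \<in> T"
    proof (rule ccontr)
      assume "k \<notin> T"
      thus False using bnd[OF k(1) _ h r1(2)] cl by blast
    qed
  qed
qed

lemma fwd_walk:
  assumes lam: "lam > 0" and n: "n \<ge> 3" and T: "T \<subseteq> {..<n}"
    and cl: "nbrs {..<n} (ring_rate lam n J) T = {}" and JV: "J \<subseteq> {..<n}"
  shows "p mod n \<in> T \<Longrightarrow> \<forall>t<d. (p + t) mod n \<notin> J \<Longrightarrow> (p + d) mod n \<in> T"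
proof (induction d)
  case 0 thus ?case by simp
next
  case (Suc d)
  have a: "(p + d) mod n \<in> T" using Suc by simp
  have b: "(p + d) mod n \<notin> J" using Suc.prems by simp
  have c: "(p + d) mod n < n" using n by simp
  have "Suc ((p + d) mod n) mod n \<in> T" using closed_edge[OF lam n T cl c b] a by simp
  thus ?case by (simp add: mod_Suc_eq)
qed

lemma bwd_walk:
  assumes lam: "lam > 0" and n: "n \<ge> 3" and T: "T \<subseteq> {..<n}"
    and cl: "nbrs {..<n} (ring_rate lam n J) T = {}" and JV: "J \<subseteq> {..<n}"
  shows "(p + d) mod n \<in> T \<Longrightarrow> \<forall>t<d. (p + t) mod n \<notin> J \<Longrightarrow> p mod n \<in> T"
proof (induction d)
  case 0 thus ?case by simp
next
  case (Suc d)
  have b: "(p + d) mod n \<notin> J" using Suc.prems by simp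
  have c: "(p + d) mod n < n" using n by simp
  have "Suc ((p + d) mod n) mod n \<in> T" using Suc.prems by (simp add: mod_Suc_eq)
  hence "(p + d) mod n \<in> T" using closed_edge[OF lam n T cl c b] by simp
  thus ?case using Suc by simp
qed

definition fd :: "nat \<Rightarrow> nat set \<Rightarrow> nat \<Rightarrow> nat" where
  "fd n J p = (LEAST d. (p + d) mod n \<in> J)"

definition ej :: "nat \<Rightarrow> nat set \<Rightarrow> nat \<Rightarrow> nat" where
  "ej n J p = (p + fd n J p) mod n"

lemma fd_in:
  assumes "j0 \<in> J" "J \<subseteq> {..<n}" "p < n"
  shows "(p + fd n J p) mod n \<in> J"
proof -
  have "j0 < n" using assms by auto
  hence "(p + (j0 + n - p)) mod n = j0" using assms by simp
  hence "(p + (j0 + n - p)) mod n \<in> J" using assms by simp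
  thus ?thesis unfolding fd_def by (rule LeastI)
qed

lemma fd_min: "t < fd n J p \<Longrightarrow> (p + t) mod n \<notin> J"
  unfolding fd_def by (rule not_less_Least)

lemma class_closed:
  assumes lam: "lam > 0" and n: "n \<ge> 3" and T: "T \<subseteq> {..<n}"
    and cl: "nbrs {..<n} (ring_rate lam n J) T = {}" and JV: "J \<subseteq> {..<n}"
    and iT: "i \<in> T" and p: "p < n" and e: "ej n J p = ej n J i"
  shows "p \<in> T"
proof -
  have i: "i < n" using iT T by auto
  have e2: "(p + fd n J p) mod n = (i + fd n J i) mod n" using e unfolding ej_def .
  show ?thesis
  proof (cases "fd n J p \<le> fd n J i")
    case True
    define d where "d = fd n J i - fd n J p"
    have "((i + d) + fd n J p) mod n = (p + fd n J p) mod n" using e2 True d_def by simp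
    hence "(i + d) mod n = p mod n" by (rule mod_cancel_nat)
    moreover have "(i + d) mod n \<in> T"
      using fwd_walk[OF lam n T cl JV, of i d] iT i fd_min[of _ n J i] d_def by auto
    ultimately show ?thesis using p by simp
  next
    case False
    define d where "d = fd n J p - fd n J i"
    have "((p + d) + fd n J i) mod n = (i + fd n J i) mod n" using e2 False d_def by simp
    hence "(p + d) mod n = i mod n" by (rule mod_cancel_nat)
    hence "(p + d) mod n \<in> T" using iT i by simp
    hence "p mod n \<in> T"
      using bwd_walk[OF lam n T cl JV, of p d] fd_min[of _ n J p] d_def by auto
    thus ?thesis using p by simp
  qed
qed

lemma sum_fibres:
  fixes h :: "nat \<Rightarrow> nat"
  assumes "finite V"
  shows "(\<Sum>i\<in>V. 1 / real (card {p\<in>V. h p = h i})) = real (card (h ` V))"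
proof -
  have "(\<Sum>i\<in>V. 1 / real (card {p\<in>V. h p = h i}))
      = (\<Sum>y\<in>h ` V. \<Sum>i\<in>{x\<in>V. h x = y}. 1 / real (card {p\<in>V. h p = h i}))"
    using assms by (rule sum.image_gen)
  also have "\<dots> = (\<Sum>y\<in>h ` V. 1)"
  proof (rule sum.cong)
    fix y assume y: "y \<in> h ` V"
    have "(\<Sum>i\<in>{x\<in>V. h x = y}. 1 / real (card {p\<in>V. h p = h i}))
        = (\<Sum>i\<in>{x\<in>V. h x = y}. 1 / real (card {p\<in>V. h p = y}))"
      by (rule sum.cong) auto
    also have "\<dots> = real (card {x\<in>V. h x = y}) * (1 / real (card {p\<in>V. h p = y}))"
      by simp
    also have "\<dots> = 1"
    proof -
      have "{x\<in>V. h x = y} \<noteq> {}" using y by auto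
      moreover have "finite {x\<in>V. h x = y}" using assms by simp
      ultimately have "card {x\<in>V. h x = y} > 0" by (simp add: card_gt_0_iff)
      thus ?thesis by simp
    qed
    finally show "(\<Sum>i\<in>{x\<in>V. h x = y}. 1 / real (card {p\<in>V. h p = h i})) = 1" .
  qed simp
  also have "\<dots> = real (card (h ` V))" by simp
  finally show ?thesis .
qed




lemma node_bound:
  assumes lam: "lam > 0" and ls: "ls > 0" and n: "n \<ge> 3" and JV: "J \<subseteq> {..<n}"
    and i: "i < n" and K: "K \<ge> 1"
  shows "version_age {..<n} (ring_src lam n) (ring_rate lam n J) ls {i}
     \<le> real K * (2 * ls / lam) + (ls * real n / lam) * (1 / real K + 1 / real (card {p\<in>{..<n}. ej n J p = ej n J i}))"
proof -
  define M where "M = card {p\<in>{..<n}. ej n J p = ej n J i}"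
  have "card {p\<in>{..<n}. ej n J p = ej n J i} > 0"
    by (rule card_gt_0_iff[THEN iffD2]) (use i in auto)
  hence M1: "M \<ge> 1" unfolding M_def by simp
  have npos: "real n > 0" using n by simp
  have l0: "\<forall>j. ring_src lam n j = lam / real n" unfolding ring_src_def by simp
  have x: "lam / real n > 0" using lam npos by simp
  have l: "\<forall>i j. ring_rate lam n J i j \<ge> 0" using rr_nonneg[OF lam] by blast
  have w: "\<forall>S i. S \<subseteq> {..<n} \<longrightarrow> i \<in> nbrs {..<n} (ring_rate lam n J) S \<longrightarrow>
      (\<Sum>j\<in>S. ring_rate lam n J i j) \<ge> lam / 2" using rr_weight[OF lam] by blast
  have g: "lam / 2 > 0" using lam by simp
  note main = age_main[OF finite_lessThan l0 x l less_imp_le[OF ls] g w M1 K, where k = "card ({..<n} - {i})"]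
  have T: "\<forall>T. {i} \<subseteq> T \<longrightarrow> T \<subseteq> {..<n} \<longrightarrow> nbrs {..<n} (ring_rate lam n J) T = {} \<longrightarrow> M \<le> card T"
  proof (intro allI impI)
    fix T assume a: "{i} \<subseteq> T" "T \<subseteq> {..<n}" "nbrs {..<n} (ring_rate lam n J) T = {}"
    have "{p\<in>{..<n}. ej n J p = ej n J i} \<subseteq> T"
      using class_closed[OF lam n a(2) a(3) JV] a(1) by blast
    moreover have "finite T" using a(2) finite_subset by blast
    ultimately show "M \<le> card T" unfolding M_def by (rule card_mono[rotated])
  qed
  have "version_age {..<n} (ring_src lam n) (ring_rate lam n J) ls {i}
      \<le> real (K - card {i}) * (ls / (lam / 2)) + ls / (lam / real n * real (min K M))"
    unfolding version_age_def using main T i ls by auto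
  also have "\<dots> \<le> real K * (2 * ls / lam) + (ls * real n / lam) * (1 / real K + 1 / real M)"
  proof -
    have a1: "real (K - card {i}) * (ls / (lam / 2)) \<le> real K * (2 * ls / lam)"
      using ls lam by (intro mult_mono) (auto simp: mult.commute)
    have mpos: "real (min K M) > 0" using K M1 by simp
    have e: "ls / (lam / real n * real (min K M)) = (ls * real n / lam) * (1 / real (min K M))"
      using npos lam by (simp add: field_simps)
    have "1 / real (min K M) \<le> 1 / real K + 1 / real M"
      using K M1 by (cases "K \<le> M") (auto simp: min_def)
    hence "(ls * real n / lam) * (1 / real (min K M)) \<le> (ls * real n / lam) * (1 / real K + 1 / real M)"
      using ls lam npos by (intro mult_left_mono) auto
    thus ?thesis using a1 e by linarith
  qed
  finally show ?thesis unfolding M_def .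
qed




theorem theorem4:
  fixes ls lam \<alpha> c :: real and ntil :: "nat \<Rightarrow> nat"
  assumes "ls > 0" and "lam > 0" and "0 < \<alpha>" and "\<alpha> < 1" and "c > 0"
    and "\<And>n. n \<ge> 3 \<Longrightarrow> 1 \<le> ntil n \<and> ntil n \<le> n \<and> real (ntil n) \<le> c * real n powr \<alpha>"
  shows "\<exists>C>0. \<exists>N. \<forall>n\<ge>N. \<forall>J. J \<subseteq> {..<n} \<and> card J = ntil n \<longrightarrow>
           jammed_ring_avg_age ls lam n J
             \<le> (if \<alpha> \<ge> 1/2 then C * real n powr \<alpha> else C * sqrt (real n))"
proof (intro exI conjI allI impI)
  note ls = assms(1) and lam = assms(2)
  show "(ls / lam) * (5 + c) > 0" using assms by simp
  fix n :: nat and J assume n: "n \<ge> 3" and J: "J \<subseteq> {..<n} \<and> card J = ntil n"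
  have JV: "J \<subseteq> {..<n}" using J by simp
  have cJ: "real (card J) \<le> c * real n powr \<alpha>" using assms(6)[OF n] J by simp
  have Jne: "J \<noteq> {}" using assms(6)[OF n] J by auto
  obtain j0 where j0: "j0 \<in> J" using Jne by blast
  define s where "s = sqrt (real n)"
  define K where "K = nat \<lceil>s\<rceil>"
  have s1: "s \<ge> 1" unfolding s_def using n by simp
  have Ks: "real K \<ge> s" "real K \<le> s + 1" unfolding K_def using s1 by (simp_all add: of_nat_nat)
  have K1: "K \<ge> 1" using Ks s1 by linarith
  have npos: "real n > 0" using n by simp
  define M where "M i = card {p\<in>{..<n}. ej n J p = ej n J i}" for i
  define B where "B = real K * (2 * ls / lam) + (ls * real n / lam) * (1 / real K)"
  have nb: "version_age {..<n} (ring_src lam n) (ring_rate lam n J) ls {i}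
      \<le> B + (ls * real n / lam) * (1 / real (M i))" if "i < n" for i
    using node_bound[OF lam ls n JV that K1] unfolding B_def M_def by (simp add: distrib_left)
  have sumM: "(\<Sum>i<n. 1 / real (M i)) \<le> real (card J)"
  proof -
    have "(\<Sum>i<n. 1 / real (M i)) = real (card (ej n J ` {..<n}))"
      unfolding M_def by (rule sum_fibres) simp
    also have "\<dots> \<le> real (card J)"
    proof -
      have "ej n J ` {..<n} \<subseteq> J" using fd_in[OF j0 JV] unfolding ej_def by auto
      moreover have "finite J" using JV finite_subset by blast
      ultimately show ?thesis by (simp add: card_mono)
    qed
    finally show ?thesis .
  qed
  have "(\<Sum>i<n. version_age {..<n} (ring_src lam n) (ring_rate lam n J) ls {i})
      \<le> (\<Sum>i<n. B + (ls * real n / lam) * (1 / real (M i)))"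
    by (rule sum_mono) (use nb in simp)
  also have "\<dots> = real n * B + (ls * real n / lam) * (\<Sum>i<n. 1 / real (M i))"
    by (simp add: sum.distrib sum_distrib_left)
  also have "\<dots> \<le> real n * B + (ls * real n / lam) * real (card J)"
    using sumM ls lam npos by (intro add_left_mono mult_left_mono) auto
  finally have S: "(\<Sum>i<n. version_age {..<n} (ring_src lam n) (ring_rate lam n J) ls {i})
      \<le> real n * B + (ls * real n / lam) * real (card J)" .
  have avg: "jammed_ring_avg_age ls lam n J \<le> B + (ls / lam) * real (card J)"
  proof -
    have "jammed_ring_avg_age ls lam n J \<le> (1 / real n) * (real n * B + (ls * real n / lam) * real (card J))"
      unfolding jammed_ring_avg_age_def using S npos by (intro mult_left_mono) auto
    also have "\<dots> = B + (ls / lam) * real (card J)" using npos by (simp add: field_simps)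
    finally show ?thesis .
  qed
  have B5: "B \<le> (ls / lam) * (5 * s)"
  proof -
    have "real K * (2 * ls / lam) \<le> (2 * s) * (2 * ls / lam)"
      using Ks s1 ls lam by (intro mult_right_mono) auto
    moreover have "(ls * real n / lam) * (1 / real K) \<le> (ls * real n / lam) * (1 / s)"
      using Ks s1 ls lam npos by (intro mult_left_mono divide_left_mono) auto
    moreover have "real n / s = s" unfolding s_def using npos
      by (metis real_div_sqrt less_imp_le)
    moreover have "(ls * real n / lam) * (1 / s) = (ls / lam) * (real n / s)" by simp
    ultimately have e1: "(ls * real n / lam) * (1 / s) = (ls / lam) * s" by simp
    have e2: "(2 * s) * (2 * ls / lam) = (ls / lam) * (4 * s)" by (simp add: field_simps)
    have e3: "(ls / lam) * (5 * s) = (ls / lam) * (4 * s) + (ls / lam) * s" by (simp add: field_simps)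
    show ?thesis unfolding B_def e3 using \<open>real K * (2 * ls / lam) \<le> (2 * s) * (2 * ls / lam)\<close> \<open>(ls * real n / lam) * (1 / real K) \<le> (ls * real n / lam) * (1 / s)\<close> e1 e2 by linarith
  qed
  have fin: "jammed_ring_avg_age ls lam n J \<le> (ls / lam) * (5 * s + c * real n powr \<alpha>)"
  proof -
    have "(ls / lam) * real (card J) \<le> (ls / lam) * (c * real n powr \<alpha>)"
      using cJ ls lam by (intro mult_left_mono) auto
    thus ?thesis using avg B5 by (simp add: distrib_left)
  qed
  have sp: "s = real n powr (1/2)" unfolding s_def using npos by (simp add: powr_half_sqrt)
  have n1: "real n \<ge> 1" using n by simp
  show "jammed_ring_avg_age ls lam n J
        \<le> (if \<alpha> \<ge> 1/2 then (ls / lam) * (5 + c) * real n powr \<alpha> else (ls / lam) * (5 + c) * sqrt (real n))"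
  proof (cases "\<alpha> \<ge> 1/2")
    case True
    have "s \<le> real n powr \<alpha>" unfolding sp using True n1 by (intro powr_mono) auto
    hence "5 * s + c * real n powr \<alpha> \<le> (5 + c) * real n powr \<alpha>" by (simp add: distrib_right)
    hence "(ls / lam) * (5 * s + c * real n powr \<alpha>) \<le> (ls / lam) * ((5 + c) * real n powr \<alpha>)"
      using ls lam by (intro mult_left_mono) auto
    thus ?thesis using fin True by simp
  next
    case False
    have "real n powr \<alpha> \<le> s" unfolding sp using False n1 by (intro powr_mono) auto
    hence "5 * s + c * real n powr \<alpha> \<le> (5 + c) * s" using assms(5) by (simp add: distrib_right)
    hence "(ls / lam) * (5 * s + c * real n powr \<alpha>) \<le> (ls / lam) * ((5 + c) * s)"
      using ls lam by (intro mult_left_mono) auto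
    thus ?thesis using fin False unfolding s_def by simp
  qed
qed


end
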